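(* Let $m,n\in\mathbb{N}$ and $f:\mathbb{Z}_n\to\mathbb{C}$. Suppose $\Gamma\subseteq\mathbb{Z}_n$ satisfies $\|f-f|_\Gamma\|_2^2\le\epsilon$ for some $\epsilon>0$. Let $\ell:=\min(n,m)$ and let $g:\mathbb{Z}_m\to\mathbb{C}$ be defined by $g(x)=f(x)$ for $0\le x<\ell$ and $g(x)=0$ otherwise. Let $\epsilon'>0$, let $r=|\Gamma|\,\|f\|_2^2/(2\epsilon')$ and $\Gamma'=\bigcup_{\alpha\in\Gamma}\{\beta\in\mathbb{Z}_m:|\frac mn\alpha-\beta|_m\le r+1\}$. Then, with $t=n/m$, \[\|g-g|_{\Gamma'}\|_2^2\le t\epsilon+\epsilon'+2\sqrt{t\epsilon\epsilon'}.\]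
   Context: $\mathbb{Z}_n=\{0,\dots,n-1\}$ with addition mod $n$; elements are treated as these integer representatives. For $h:\mathbb{Z}_n\to\mathbb{C}$: $\langle h_1,h_2\rangle=\frac1n\sum_x h_1(x)\overline{h_2(x)}$, $\|h\|_2^2=\langle h,h\rangle$, $\chi_\alpha(x)=\exp(2\pi i\alpha x/n)$, $\widehat h(\alpha)=\langle h,\chi_\alpha\rangle$, and for $\Gamma\subseteq\mathbb{Z}_n$, $h|_\Gamma=\sum_{\alpha\in\Gamma}\widehat h(\alpha)\chi_\alpha$; analogously on $\mathbb{Z}_m$ with $m$ in place of $n$. For $k\in\mathbb{N}$, $x\in\mathbb{R}$: $|x|_k=\min\{|x-kz|:z\in\mathbb{Z}\}$. *)

theory Defs
  imports Complex_Main
begin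

text \<open>Z_n is represented by the integer representatives {0..<n} (type nat);
functions Z_n -> C are functions nat => complex whose values on {0..<n} matter.\<close>

definition zinner :: "nat \<Rightarrow> (nat \<Rightarrow> complex) \<Rightarrow> (nat \<Rightarrow> complex) \<Rightarrow> complex" where
  "zinner n h1 h2 = (1 / of_nat n) * (\<Sum>x<n. h1 x * cnj (h2 x))"

definition znorm2sq :: "nat \<Rightarrow> (nat \<Rightarrow> complex) \<Rightarrow> real" where
  "znorm2sq n h = Re (zinner n h h)"

definition zchar :: "nat \<Rightarrow> nat \<Rightarrow> nat \<Rightarrow> complex" where
  "zchar n \<alpha> x = exp (2 * of_real pi * \<i> * of_nat \<alpha> * of_nat x / of_nat n)"

definition zfourier :: "nat \<Rightarrow> (nat \<Rightarrow> complex) \<Rightarrow> nat \<Rightarrow> complex" where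
  "zfourier n h \<alpha> = zinner n h (zchar n \<alpha>)"

definition zrestr :: "nat \<Rightarrow> (nat \<Rightarrow> complex) \<Rightarrow> nat set \<Rightarrow> nat \<Rightarrow> complex" where
  "zrestr n h \<Gamma> = (\<lambda>x. \<Sum>\<alpha>\<in>\<Gamma>. zfourier n h \<alpha> * zchar n \<alpha> x)"

definition distk :: "nat \<Rightarrow> real \<Rightarrow> real" where
  "distk k x = Inf {\<bar>x - real k * of_int z\<bar> | z. True}"

end

theory Submission
  imports Defs "HOL-Analysis.Analysis"
begin


definition E :: "real \<Rightarrow> complex" where
  "E \<theta> = exp (2 * of_real pi * \<i> * of_real \<theta>)"

lemma E_add: "E (a + b) = E a * E b"
  unfolding E_def by (simp add: exp_add[symmetric] algebra_simps)

lemma E_cnj: "cnj (E a) = E (- a)"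
  unfolding E_def by (simp add: exp_cnj)

lemma E_pow: "E a ^ k = E (real k * a)"
  unfolding E_def by (simp add: exp_of_nat_mult[symmetric] algebra_simps)

lemma E_int: "E (of_int k) = 1"
  unfolding E_def exp_eq_1 by simp

lemma E_eq_1: assumes "E \<theta> = 1" shows "\<exists>k::int. \<theta> = of_int k"
proof -
  from assms obtain k::int where "2 * pi * \<theta> = of_int (2*k) * pi"
    unfolding E_def exp_eq_1 by auto
  hence "\<theta> = of_int k" by (simp add: algebra_simps)
  thus ?thesis by blast
qed

lemma norm_E [simp]: "cmod (E \<theta>) = 1"
proof -
  have "E \<theta> = exp (\<i> * of_real (2*pi*\<theta>))" unfolding E_def by (simp add: algebra_simps)
  thus ?thesis by simp
qed

lemma E_minus_1: "cmod (E y - 1) = 2 * \<bar>sin (pi * y)\<bar>"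
proof -
  have e: "E y = cis (2*pi*y)" unfolding E_def cis_conv_exp by (simp add: algebra_simps)
  have "(cmod (E y - 1))^2 = (cos (2*pi*y) - 1)^2 + (sin (2*pi*y))^2"
    unfolding e by (simp add: cmod_def)
  also have "\<dots> = (sin (2*pi*y))^2 + (cos (2*pi*y))^2 - 2 * cos (2*pi*y) + 1"
    by (simp add: power2_diff)
  also have "\<dots> = 2 - 2 * cos (2*(pi*y))" by (simp only: sin_cos_squared_add) (simp add: mult.assoc)
  also have "\<dots> = (2 * \<bar>sin (pi * y)\<bar>)^2" by (simp add: cos_double_sin power_mult_distrib)
  finally show ?thesis by (rule power2_eq_imp_eq) auto
qed

lemma jordan: assumes "0 \<le> x" "x \<le> pi/2" shows "2 / pi * x \<le> sin x"
proof -
  have c: "concave_on {0..pi} sin"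
    by (rule f''_le0_imp_concave[where f'=cos and f''="\<lambda>x. - sin x"])
       (auto intro!: derivative_eq_intros sin_ge_zero)
  define t where "t = 2 / pi * x"
  have t: "0 \<le> t" "t \<le> 1" using assms pi_gt_zero unfolding t_def by (auto simp: field_simps)
  have "(1 - t) * sin 0 + t * sin (pi/2) \<le> sin ((1 - t) *\<^sub>R 0 + t *\<^sub>R (pi/2))"
    by (rule concave_onD[OF c]) (use t in auto)
  moreover have "(1 - t) *\<^sub>R 0 + t *\<^sub>R (pi/2) = x" unfolding t_def by simp
  ultimately show ?thesis unfolding t_def by simp
qed

lemma sin_lower: assumes "\<bar>y\<bar> \<le> 1/2" shows "2 * \<bar>y\<bar> \<le> \<bar>sin (pi * y)\<bar>"
proof -
  have "2 / pi * (pi * \<bar>y\<bar>) \<le> sin (pi * \<bar>y\<bar>)"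
  proof (rule jordan)
    show "pi * \<bar>y\<bar> \<le> pi / 2" using assms pi_gt_zero mult_left_mono[OF assms, of pi] by simp
  qed simp
  moreover have "2 / pi * (pi * \<bar>y\<bar>) = 2 * \<bar>y\<bar>" by simp
  moreover have "\<bar>sin (pi * y)\<bar> = \<bar>sin (pi * \<bar>y\<bar>)\<bar>"
  proof (cases "y \<ge> 0")
    case False
    hence "pi * \<bar>y\<bar> = - (pi * y)" by simp
    thus ?thesis by (simp only: sin_minus abs_minus_cancel)
  qed simp
  ultimately show ?thesis by simp
qed


lemma zchar_E: "zchar N a x = E (real a * real x / real N)"
  unfolding zchar_def E_def by (simp add: algebra_simps)

lemma zchar_sym: "zchar N a x = zchar N x a"
  unfolding zchar_def by (simp add: algebra_simps)

lemma char_prod: "zchar N a x * cnj (zchar N b x) = E ((real a - real b) / real N) ^ x"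
proof -
  have "zchar N a x * cnj (zchar N b x) = E (real a * real x / real N + - (real b * real x / real N))"
    unfolding zchar_E E_cnj E_add by simp
  also have "real a * real x / real N + - (real b * real x / real N) = real x * ((real a - real b) / real N)"
    by (simp add: algebra_simps diff_divide_distrib)
  finally show ?thesis by (simp add: E_pow)
qed

lemma orth:
  assumes "N > 0" "a < N" "b < N"
  shows "(\<Sum>x<N. zchar N a x * cnj (zchar N b x)) = (if a = b then of_nat N else 0)"
proof (cases "a = b")
  case True
  thus ?thesis unfolding char_prod by (simp add: E_def)
next
  case False
  define z where "z = E ((real a - real b) / real N)"
  have z1: "z \<noteq> 1"
  proof
    assume "z = 1"
    hence "E ((real a - real b) / real N) = 1" using z_def by simp
    from E_eq_1[OF this] obtain k :: int where k: "(real a - real b) / real N = of_int k" by blast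
    hence k2: "real a - real b = of_int k * real N" using assms by (simp add: field_simps)
    have "\<bar>real a - real b\<bar> < real N" using assms by auto
    hence "\<bar>of_int k\<bar> * real N < 1 * real N" using k2 by (simp add: abs_mult)
    hence "\<bar>of_int k :: real\<bar> < 1" using assms by (simp only: mult_less_cancel_right)
    hence "k = 0" by linarith
    thus False using k2 False by simp
  qed
  have zN: "z ^ N = 1"
  proof -
    have "z ^ N = E (real N * ((real a - real b) / real N))" unfolding z_def E_pow ..
    also have "real N * ((real a - real b) / real N) = of_int (int a - int b)" using assms by simp
    finally show ?thesis by (simp only: E_int)
  qed
  have "(\<Sum>x<N. zchar N a x * cnj (zchar N b x)) = (\<Sum>x<N. z ^ x)"
    unfolding char_prod z_def ..
  also have "\<dots> = 0" using geometric_sum[OF z1, of N] zN by simp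
  finally show ?thesis using False by simp
qed

lemma orth2:
  assumes "N > 0" "x < N" "y < N"
  shows "(\<Sum>\<beta><N. zchar N \<beta> x * cnj (zchar N \<beta> y)) = (if x = y then of_nat N else 0)"
proof -
  have "(\<Sum>\<beta><N. zchar N \<beta> x * cnj (zchar N \<beta> y)) = (\<Sum>\<beta><N. zchar N x \<beta> * cnj (zchar N y \<beta>))"
    by (rule sum.cong[OF refl]) (metis zchar_sym)
  thus ?thesis using orth[OF assms] by simp
qed

lemma inversion:
  assumes "N > 0" "x < N"
  shows "(\<Sum>\<beta><N. zfourier N u \<beta> * zchar N \<beta> x) = u x"
proof -
  have "(\<Sum>\<beta><N. zfourier N u \<beta> * zchar N \<beta> x)
      = (\<Sum>\<beta><N. \<Sum>y<N. (1 / of_nat N) * u y * (zchar N \<beta> x * cnj (zchar N \<beta> y)))"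
    unfolding zfourier_def zinner_def sum_distrib_right sum_distrib_left
    by (intro sum.cong refl) (simp add: mult_ac)
  also have "\<dots> = (\<Sum>y<N. (1 / of_nat N) * u y * (\<Sum>\<beta><N. zchar N \<beta> x * cnj (zchar N \<beta> y)))"
    by (subst sum.swap) (simp add: sum_distrib_left)
  also have "\<dots> = (\<Sum>y<N. if y = x then u x else 0)"
    using assms by (intro sum.cong refl) (auto simp: orth2)
  also have "\<dots> = u x" using assms by simp
  finally show ?thesis .
qed


definition nrm :: "nat \<Rightarrow> (nat \<Rightarrow> complex) \<Rightarrow> real" where
  "nrm N u = L2_set (\<lambda>x. cmod (u x)) {..<N}"

lemma nrm_sq: "(nrm N u)^2 = (\<Sum>x<N. (cmod (u x))^2)"
  unfolding nrm_def L2_set_def by (simp add: sum_nonneg)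

lemma nrm_nonneg: "0 \<le> nrm N u"
  unfolding nrm_def by (rule L2_set_nonneg)

lemma sum_cnj_of_real: "(\<Sum>x\<in>A. u x * cnj (u x)) = of_real (\<Sum>x\<in>A. (cmod (u x))^2)"
  by (simp only: of_real_sum complex_norm_square)

lemma znorm_nrm: "znorm2sq N u = (nrm N u)^2 / real N"
  unfolding znorm2sq_def zinner_def nrm_sq sum_cnj_of_real
  by (cases "N = 0") (simp_all add: Re_divide power2_eq_square)

lemma nrm_cong: "(\<And>x. x < N \<Longrightarrow> u x = v x) \<Longrightarrow> nrm N u = nrm N v"
  unfolding nrm_def by (intro L2_set_cong) auto

lemma parseval_sum:
  assumes "N > 0" "C \<subseteq> {..<N}"
  shows "(nrm N (\<lambda>x. \<Sum>\<beta>\<in>C. c \<beta> * zchar N \<beta> x))^2 = real N * (\<Sum>\<beta>\<in>C. (cmod (c \<beta>))^2)"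
proof -
  have fin: "finite C" using assms finite_subset by blast
  have "complex_of_real ((nrm N (\<lambda>x. \<Sum>\<beta>\<in>C. c \<beta> * zchar N \<beta> x))^2)
     = (\<Sum>x<N. (\<Sum>\<beta>\<in>C. c \<beta> * zchar N \<beta> x) * cnj (\<Sum>\<beta>\<in>C. c \<beta> * zchar N \<beta> x))"
    unfolding nrm_sq sum_cnj_of_real ..
  also have "\<dots> = (\<Sum>x<N. \<Sum>\<beta>\<in>C. \<Sum>\<gamma>\<in>C. c \<beta> * cnj (c \<gamma>) * (zchar N \<beta> x * cnj (zchar N \<gamma> x)))"
    unfolding cnj_sum sum_product by (intro sum.cong refl) (simp add: mult_ac)
  also have "\<dots> = (\<Sum>\<beta>\<in>C. \<Sum>\<gamma>\<in>C. c \<beta> * cnj (c \<gamma>) * (\<Sum>x<N. zchar N \<beta> x * cnj (zchar N \<gamma> x)))"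
    by (subst sum.swap) (simp add: sum.swap[of _ "{..<N}"] sum_distrib_left)
  also have "\<dots> = (\<Sum>\<beta>\<in>C. \<Sum>\<gamma>\<in>C. if \<beta> = \<gamma> then c \<beta> * cnj (c \<beta>) * of_nat N else 0)"
    apply (intro sum.cong refl)
    subgoal for \<beta> \<gamma>
    proof -
      assume "\<beta> \<in> C" "\<gamma> \<in> C"
      hence "\<beta> < N" "\<gamma> < N" using assms by auto
      thus ?thesis using orth[OF assms(1), of \<beta> \<gamma>] by simp
    qed
    done
  also have "\<dots> = (\<Sum>\<beta>\<in>C. c \<beta> * cnj (c \<beta>) * of_nat N)"
    using fin by (simp add: sum.delta)
  also have "\<dots> = complex_of_real (real N * (\<Sum>\<beta>\<in>C. (cmod (c \<beta>))^2))"
    by (simp add: sum_distrib_left[symmetric] sum_distrib_right[symmetric] sum_cnj_of_real mult.commute)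
  finally show ?thesis using of_real_eq_iff by blast
qed


definition P :: "nat \<Rightarrow> nat set \<Rightarrow> (nat \<Rightarrow> complex) \<Rightarrow> nat \<Rightarrow> complex" where
  "P N B u = (\<lambda>x. u x - zrestr N u B x)"

lemma proj_eq:
  assumes "N > 0" "B \<subseteq> {..<N}" "x < N"
  shows "P N B u x = zrestr N u ({..<N} - B) x"
proof -
  have "u x = (\<Sum>\<beta><N. zfourier N u \<beta> * zchar N \<beta> x)" using inversion assms by simp
  also have "\<dots> = (\<Sum>\<beta>\<in>{..<N} - B. zfourier N u \<beta> * zchar N \<beta> x) + (\<Sum>\<beta>\<in>B. zfourier N u \<beta> * zchar N \<beta> x)"
    using assms by (intro sum.subset_diff) auto
  finally show ?thesis unfolding P_def zrestr_def by simp
qed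

lemma proj_nrm:
  assumes "N > 0" "B \<subseteq> {..<N}"
  shows "(nrm N (P N B u))^2 = real N * (\<Sum>\<beta>\<in>{..<N} - B. (cmod (zfourier N u \<beta>))^2)"
proof -
  have "nrm N (P N B u) = nrm N (\<lambda>x. \<Sum>\<beta>\<in>{..<N} - B. zfourier N u \<beta> * zchar N \<beta> x)"
    using proj_eq[OF assms] by (intro nrm_cong) (simp add: zrestr_def)
  thus ?thesis using parseval_sum[OF assms(1), of "{..<N} - B"] by auto
qed

lemma parseval:
  assumes "N > 0"
  shows "(nrm N u)^2 = real N * (\<Sum>\<beta><N. (cmod (zfourier N u \<beta>))^2)"
proof -
  have "nrm N u = nrm N (P N {} u)" by (simp add: P_def zrestr_def)
  thus ?thesis using proj_nrm[OF assms, of "{}" u] by simp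
qed

lemma bessel:
  assumes "N > 0" "B \<subseteq> {..<N}"
  shows "real N * (\<Sum>\<beta>\<in>B. (cmod (zfourier N u \<beta>))^2) \<le> (nrm N u)^2"
  unfolding parseval[OF assms(1)] using assms
  by (intro mult_left_mono sum_mono2) auto

lemma proj_le:
  assumes "N > 0" "B \<subseteq> {..<N}"
  shows "nrm N (P N B u) \<le> nrm N u"
proof -
  have "(nrm N (P N B u))^2 \<le> (nrm N u)^2"
    unfolding proj_nrm[OF assms] using bessel[OF assms(1), of "{..<N} - B" u] by simp
  thus ?thesis using nrm_nonneg power2_le_imp_le by blast
qed

lemma zfourier_add: "zfourier N (\<lambda>x. u x + v x) \<beta> = zfourier N u \<beta> + zfourier N v \<beta>"
  unfolding zfourier_def zinner_def by (simp add: sum.distrib distrib_left distrib_right)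

lemma zfourier_sum: "zfourier N (\<lambda>x. \<Sum>i\<in>I. a i * v i x) \<beta> = (\<Sum>i\<in>I. a i * zfourier N (v i) \<beta>)"
  unfolding zfourier_def zinner_def sum_distrib_left sum_distrib_right
  by (subst sum.swap) (simp add: mult_ac)

lemma P_add: "P N B (\<lambda>x. u x + v x) x = P N B u x + P N B v x"
  unfolding P_def zrestr_def zfourier_add by (simp add: distrib_right sum.distrib)

lemma P_sum: "P N B (\<lambda>x. \<Sum>i\<in>I. a i * v i x) x = (\<Sum>i\<in>I. a i * P N B (v i) x)"
  unfolding P_def zrestr_def zfourier_sum
  by (simp add: sum_distrib_right sum_distrib_left sum_subtractf right_diff_distrib mult_ac sum.swap[of _ B])

lemma nrm_triangle: "nrm N (\<lambda>x. u x + v x) \<le> nrm N u + nrm N v"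
proof -
  have "nrm N (\<lambda>x. u x + v x) \<le> L2_set (\<lambda>x. cmod (u x) + cmod (v x)) {..<N}"
    unfolding nrm_def by (intro L2_set_mono norm_triangle_ineq) auto
  also have "\<dots> \<le> nrm N u + nrm N v" unfolding nrm_def by (rule L2_set_triangle_ineq)
  finally show ?thesis .
qed

lemma nrm_scale: "nrm N (\<lambda>x. a * u x) = cmod a * nrm N u"
  unfolding nrm_def by (simp add: L2_set_right_distrib norm_mult)

lemma nrm_sum: "finite I \<Longrightarrow> nrm N (\<lambda>x. \<Sum>i\<in>I. w i x) \<le> (\<Sum>i\<in>I. nrm N (w i))"
proof (induction I rule: finite_induct)
  case empty
  show ?case by (simp add: nrm_def L2_set_def)
next
  case (insert i I)
  have "nrm N (\<lambda>x. \<Sum>j\<in>insert i I. w j x) = nrm N (\<lambda>x. w i x + (\<Sum>j\<in>I. w j x))"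
    using insert by simp
  also have "\<dots> \<le> nrm N (w i) + nrm N (\<lambda>x. \<Sum>j\<in>I. w j x)" by (rule nrm_triangle)
  also have "\<dots> \<le> nrm N (w i) + (\<Sum>j\<in>I. nrm N (w j))" using insert by simp
  finally show ?case using insert by simp
qed


lemma distk_le: "distk k v \<le> \<bar>v - real k * of_int z\<bar>"
  unfolding distk_def by (rule cInf_lower) (auto intro: bdd_belowI[of _ 0])

lemma distk_attain:
  assumes "k > 0"
  shows "\<exists>z::int. distk k v = \<bar>v - real k * of_int z\<bar>"
proof -
  define z0 where "z0 = \<lfloor>v / real k + 1/2\<rfloor>"
  have h0: "\<bar>v / real k - of_int z0\<bar> \<le> 1/2" unfolding z0_def by linarith
  have min: "\<bar>v - real k * of_int z0\<bar> \<le> \<bar>v - real k * of_int z\<bar>" for z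
  proof -
    have "\<bar>v / real k - of_int z0\<bar> \<le> \<bar>v / real k - of_int z\<bar>"
    proof (cases "z = z0")
      case False
      hence "1 \<le> \<bar>z - z0\<bar>" by linarith
      hence "\<bar>of_int z - of_int z0 :: real\<bar> \<ge> 1" by (metis of_int_1_le_iff of_int_abs of_int_diff)
      thus ?thesis using h0 by linarith
    qed simp
    hence "real k * \<bar>v / real k - of_int z0\<bar> \<le> real k * \<bar>v / real k - of_int z\<bar>" by (simp add: mult_left_mono)
    moreover have "real k * \<bar>v / real k - of_int w\<bar> = \<bar>v - real k * of_int w\<bar>" for w
    proof -
      have "real k * \<bar>v / real k - of_int w\<bar> = \<bar>real k * (v / real k - of_int w)\<bar>" by (simp add: abs_mult)
      also have "real k * (v / real k - of_int w) = v - real k * of_int w" using assms by (simp add: field_simps)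
      finally show ?thesis .
    qed
    ultimately show ?thesis by simp
  qed
  have "distk k v = \<bar>v - real k * of_int z0\<bar>"
    unfolding distk_def by (rule cInf_eq_minimum) (use min in auto)
  thus ?thesis by blast
qed

lemma E_minus_1_lower:
  assumes "m > 0"
  shows "4 * distk m (real m * \<theta>) / real m \<le> cmod (E \<theta> - 1)"
proof -
  define z0 where "z0 = \<lfloor>\<theta> + 1/2\<rfloor>"
  define y where "y = \<theta> - of_int z0"
  have y: "\<bar>y\<bar> \<le> 1/2" unfolding y_def z0_def by linarith
  have "E \<theta> = E y * E (of_int z0)" unfolding y_def E_add[symmetric] by simp
  hence "E \<theta> = E y" by (simp add: E_int)
  hence "cmod (E \<theta> - 1) = 2 * \<bar>sin (pi * y)\<bar>" by (simp add: E_minus_1)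
  moreover have "4 * \<bar>y\<bar> \<le> 2 * \<bar>sin (pi * y)\<bar>" using sin_lower[OF y] by simp
  moreover have "distk m (real m * \<theta>) \<le> real m * \<bar>y\<bar>"
  proof -
    have "distk m (real m * \<theta>) \<le> \<bar>real m * \<theta> - real m * of_int z0\<bar>" by (rule distk_le)
    also have "\<dots> = real m * \<bar>y\<bar>" unfolding y_def right_diff_distrib[symmetric] abs_mult by simp
    finally show ?thesis .
  qed
  ultimately have "4 * distk m (real m * \<theta>) \<le> real m * cmod (E \<theta> - 1)"
  proof -
    assume a: "cmod (E \<theta> - 1) = 2 * \<bar>sin (pi * y)\<bar>" "4 * \<bar>y\<bar> \<le> 2 * \<bar>sin (pi * y)\<bar>"
      "distk m (real m * \<theta>) \<le> real m * \<bar>y\<bar>"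
    have "real m * (4 * \<bar>y\<bar>) \<le> real m * (2 * \<bar>sin (pi * y)\<bar>)" using a(2) by (intro mult_left_mono) auto
    moreover have "real m * (4 * \<bar>y\<bar>) = 4 * (real m * \<bar>y\<bar>)" by simp
    moreover have "real m * cmod (E \<theta> - 1) = real m * (2 * \<bar>sin (pi * y)\<bar>)" using a(1) by simp
    ultimately show ?thesis using a(3) by linarith
  qed
  thus ?thesis using assms by (simp add: pos_divide_le_eq mult.commute)
qed

lemma geo_bound:
  assumes "m > 0" "distk m (real m * \<theta>) > 0"
  shows "cmod (\<Sum>x<L. E \<theta> ^ x) \<le> real m / (2 * distk m (real m * \<theta>))"
proof -
  define d where "d = distk m (real m * \<theta>)"
  have lo: "4 * d / real m \<le> cmod (E \<theta> - 1)" unfolding d_def by (rule E_minus_1_lower[OF assms(1)])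
  have dpos: "4 * d / real m > 0" using assms unfolding d_def by simp
  hence ne: "E \<theta> \<noteq> 1" using lo by auto
  have num: "cmod (E \<theta> ^ L - 1) \<le> 2"
    using norm_triangle_ineq4[of "E \<theta> ^ L" 1] by (simp add: norm_power)
  have "cmod (\<Sum>x<L. E \<theta> ^ x) = cmod (E \<theta> ^ L - 1) / cmod (E \<theta> - 1)"
    by (simp add: geometric_sum[OF ne] norm_divide)
  also have "\<dots> \<le> 2 / (4 * d / real m)"
    by (rule frac_le) (use num lo dpos in auto)
  also have "\<dots> = real m / (2 * d)" using assms unfolding d_def by (simp add: field_simps)
  finally show ?thesis unfolding d_def .
qed

lemma tele_step:
  fixes y :: real assumes "y > 0"
  shows "1 / (y + 1)^2 \<le> 1 / y - 1 / (y + 1)"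
proof -
  have "1 / y - 1 / (y + 1) = 1 / (y * (y + 1))" using assms by (simp add: field_simps)
  moreover have "1 / (y + 1)^2 \<le> 1 / (y * (y + 1))"
    using assms by (intro divide_left_mono) (auto simp: power2_eq_square intro!: mult_right_mono mult_pos_pos)
  ultimately show ?thesis by simp
qed

lemma tele:
  fixes x :: real assumes "x > 1"
  shows "(\<Sum>i\<le>M. 1 / (x + real i)^2) \<le> 1 / (x - 1) - 1 / (x + real M)"
proof (induction M)
  case 0
  show ?case using tele_step[of "x - 1"] assms by simp
next
  case (Suc M)
  have e: "x + real (Suc M) = (x + real M) + 1" by simp
  have "(\<Sum>i\<le>Suc M. 1 / (x + real i)^2) = (\<Sum>i\<le>M. 1 / (x + real i)^2) + 1 / (x + real (Suc M))^2"
    by (rule sum.atMost_Suc)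
  also have "\<dots> = (\<Sum>i\<le>M. 1 / (x + real i)^2) + 1 / ((x + real M) + 1)^2"
    by (simp only: e)
  also have "\<dots> \<le> (1 / (x - 1) - 1 / (x + real M)) + (1 / (x + real M) - 1 / ((x + real M) + 1))"
    using Suc tele_step[of "x + real M"] assms by (intro add_mono) auto
  also have "\<dots> = 1 / (x - 1) - 1 / (x + real (Suc M))" by (simp only: e)
  finally show ?case .
qed


lemma one_side:
  fixes K :: "int set" and b R :: real
  assumes "finite K" "\<And>j. j \<in> K \<Longrightarrow> of_int j - b > R" "R > 1"
  shows "(\<Sum>j\<in>K. 1 / (of_int j - b)^2) \<le> 1 / (R - 1)"
proof (cases "K = {}")
  case True
  thus ?thesis using assms by simp
next
  case False
  define j0 where "j0 = \<lfloor>b + R\<rfloor> + 1"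
  define x0 where "x0 = of_int j0 - b"
  have x0: "x0 > R" unfolding x0_def j0_def by linarith
  have jge: "j0 \<le> j" if "j \<in> K" for j
  proof -
    have "of_int j > b + R" using assms(2)[OF that] by simp
    hence "\<lfloor>b + R\<rfloor> < j" by (simp add: floor_less_iff)
    thus ?thesis unfolding j0_def by simp
  qed
  define M where "M = nat (Max K - j0)"
  have sub: "K \<subseteq> (\<lambda>i. j0 + int i) ` {..M}"
  proof
    fix j assume j: "j \<in> K"
    have "j \<le> Max K" using j assms(1) by simp
    hence "nat (j - j0) \<le> M" unfolding M_def by simp
    moreover have "j = j0 + int (nat (j - j0))" using jge[OF j] by simp
    ultimately show "j \<in> (\<lambda>i. j0 + int i) ` {..M}" by blast
  qed
  have "(\<Sum>j\<in>K. 1 / (of_int j - b)^2) \<le> (\<Sum>j\<in>(\<lambda>i. j0 + int i) ` {..M}. 1 / (of_int j - b)^2)"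
    by (rule sum_mono2[OF _ sub]) auto
  also have "\<dots> = (\<Sum>i\<le>M. 1 / (of_int (j0 + int i) - b)^2)"
    by (subst sum.reindex) (auto simp: inj_on_def)
  also have "\<dots> = (\<Sum>i\<le>M. 1 / (x0 + real i)^2)"
    unfolding x0_def by (intro sum.cong refl) (simp add: algebra_simps)
  also have "\<dots> \<le> 1 / (x0 - 1) - 1 / (x0 + real M)" by (rule tele) (use x0 assms in auto)
  also have "\<dots> \<le> 1 / (x0 - 1)" using x0 assms by simp
  also have "\<dots> \<le> 1 / (R - 1)" using x0 assms by (intro divide_left_mono) auto
  finally show ?thesis .
qed


lemma int_mult_small:
  fixes t :: int
  assumes "m > 0" "\<bar>int m * t\<bar> < int m"
  shows "t = 0"
proof (rule ccontr)
  assume "t \<noteq> 0"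
  hence "1 \<le> \<bar>t\<bar>" by linarith
  hence "int m * 1 \<le> int m * \<bar>t\<bar>" by (intro mult_left_mono) auto
  thus False using assms by (simp add: abs_mult)
qed

lemma beta_sum:
  fixes a R :: real
  assumes "m > 0" "R > 1"
  shows "(\<Sum>\<beta>\<in>{\<beta>. \<beta> < m \<and> distk m (a - real \<beta>) > R}. 1 / (distk m (a - real \<beta>))^2) \<le> 2 / (R - 1)"
proof -
  define S where "S = {\<beta>. \<beta> < m \<and> distk m (a - real \<beta>) > R}"
  have "\<forall>\<beta>. \<exists>z::int. distk m (a - real \<beta>) = \<bar>(a - real \<beta>) - real m * of_int z\<bar>"
    using distk_attain[OF assms(1)] by blast
  then obtain zf where zf: "\<And>\<beta>. distk m (a - real \<beta>) = \<bar>(a - real \<beta>) - real m * of_int (zf \<beta>)\<bar>"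
    by metis
  define k where "k \<beta> = int \<beta> + int m * zf \<beta>" for \<beta>
  have dk: "distk m (a - real \<beta>) = \<bar>of_int (k \<beta>) - a\<bar>" for \<beta>
    unfolding zf k_def by (simp add: algebra_simps)
  have inj: "inj_on k S"
  proof
    fix \<beta>1 \<beta>2 assume b: "\<beta>1 \<in> S" "\<beta>2 \<in> S" "k \<beta>1 = k \<beta>2"
    hence e: "int m * (zf \<beta>2 - zf \<beta>1) = int \<beta>1 - int \<beta>2" unfolding k_def by (simp add: algebra_simps)
    have "\<bar>int \<beta>1 - int \<beta>2\<bar> < int m" using b(1,2) unfolding S_def by auto
    hence "zf \<beta>2 - zf \<beta>1 = 0" using int_mult_small[OF assms(1)] e by metis
    thus "\<beta>1 = \<beta>2" using e by simp
  qed
  define K where "K = k ` S"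
  have finK: "finite K" unfolding K_def S_def by auto
  have Kbig: "\<bar>of_int j - a\<bar> > R" if "j \<in> K" for j
    using that unfolding K_def S_def by (auto simp: dk)
  have "(\<Sum>\<beta>\<in>S. 1 / (distk m (a - real \<beta>))^2) = (\<Sum>\<beta>\<in>S. 1 / (of_int (k \<beta>) - a)^2)"
    unfolding dk by simp
  also have "\<dots> = (\<Sum>j\<in>K. 1 / (of_int j - a)^2)"
    unfolding K_def by (subst sum.reindex[OF inj]) simp
  also have "\<dots> = (\<Sum>j\<in>K - {j\<in>K. of_int j > a}. 1 / (of_int j - a)^2) + (\<Sum>j\<in>{j\<in>K. of_int j > a}. 1 / (of_int j - a)^2)"
    using finK by (intro sum.subset_diff) auto
  also have "(\<Sum>j\<in>{j\<in>K. of_int j > a}. 1 / (of_int j - a)^2) \<le> 1 / (R - 1)"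
  proof (rule one_side)
    show "finite {j\<in>K. of_int j > a}" using finK by simp
    show "of_int j - a > R" if "j \<in> {j\<in>K. of_int j > a}" for j using that Kbig[of j] by auto
  qed (use assms in auto)
  also have "(\<Sum>j\<in>K - {j\<in>K. of_int j > a}. 1 / (of_int j - a)^2) \<le> 1 / (R - 1)"
  proof -
    define K2 where "K2 = K - {j\<in>K. of_int j > a}"
    have "(\<Sum>j\<in>K2. 1 / (of_int j - a)^2) = (\<Sum>j\<in>uminus ` K2. 1 / (of_int j - (- a))^2)"
      by (subst sum.reindex) (auto simp: inj_on_def power2_commute algebra_simps)
    also have "\<dots> \<le> 1 / (R - 1)"
    proof (rule one_side)
      show "finite (uminus ` K2)" using finK unfolding K2_def by simp
      show "of_int j - - a > R" if "j \<in> uminus ` K2" for j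
        using that Kbig unfolding K2_def by force
    qed (use assms in auto)
    finally show ?thesis unfolding K2_def .
  qed
  finally show ?thesis unfolding S_def by simp
qed


lemma char_prod2:
  "zchar n \<alpha> x * cnj (zchar m \<beta> x) = E (real \<alpha> / real n - real \<beta> / real m) ^ x"
proof -
  have "zchar n \<alpha> x * cnj (zchar m \<beta> x) = E (real \<alpha> * real x / real n + - (real \<beta> * real x / real m))"
    unfolding zchar_E E_cnj E_add by simp
  also have "real \<alpha> * real x / real n + - (real \<beta> * real x / real m) = real x * (real \<alpha> / real n - real \<beta> / real m)"
    by (simp add: algebra_simps)
  finally show ?thesis by (simp add: E_pow)
qed

lemma coef_bound:
  assumes "n > 0" "m > 0" "L \<le> m" "distk m (real m / real n * real \<alpha> - real \<beta>) > 0"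
  shows "cmod (zfourier m (\<lambda>x. if x < L then zchar n \<alpha> x else 0) \<beta>)
          \<le> 1 / (2 * distk m (real m / real n * real \<alpha> - real \<beta>))"
proof -
  define \<theta> where "\<theta> = real \<alpha> / real n - real \<beta> / real m"
  have mt: "real m * \<theta> = real m / real n * real \<alpha> - real \<beta>"
    unfolding \<theta>_def using assms by (simp add: field_simps)
  have "zfourier m (\<lambda>x. if x < L then zchar n \<alpha> x else 0) \<beta>
      = (1 / of_nat m) * (\<Sum>x<L. zchar n \<alpha> x * cnj (zchar m \<beta> x))"
    unfolding zfourier_def zinner_def
    by (rule arg_cong[where f = "\<lambda>s. (1 / of_nat m) * s"], rule sum.mono_neutral_cong_right) (use assms in auto)
  also have "\<dots> = (1 / of_nat m) * (\<Sum>x<L. E \<theta> ^ x)" unfolding char_prod2 \<theta>_def ..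
  finally have "cmod (zfourier m (\<lambda>x. if x < L then zchar n \<alpha> x else 0) \<beta>) = cmod (\<Sum>x<L. E \<theta> ^ x) / real m"
    by (simp add: norm_mult norm_divide)
  also have "\<dots> \<le> (real m / (2 * distk m (real m * \<theta>))) / real m"
    using geo_bound[OF assms(2), of \<theta> L] assms mt by (intro divide_right_mono) auto
  also have "\<dots> = 1 / (2 * distk m (real m / real n * real \<alpha> - real \<beta>))"
    using assms mt by simp
  finally show ?thesis .
qed

lemma trunc_bound:
  assumes "n > 0" "m > 0" "L \<le> m" "R > 1" "B \<subseteq> {..<m}"
    and "{..<m} - B \<subseteq> {\<beta>. \<beta> < m \<and> distk m (real m / real n * real \<alpha> - real \<beta>) > R}"
  shows "(nrm m (P m B (\<lambda>x. if x < L then zchar n \<alpha> x else 0)))^2 \<le> real m / (2 * (R - 1))"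
proof -
  define a where "a = real m / real n * real \<alpha>"
  define S where "S = {\<beta>. \<beta> < m \<and> distk m (a - real \<beta>) > R}"
  define u where "u = (\<lambda>x. if x < L then zchar n \<alpha> x else 0)"
  have "(\<Sum>\<beta>\<in>{..<m} - B. (cmod (zfourier m u \<beta>))^2) \<le> (\<Sum>\<beta>\<in>S. (cmod (zfourier m u \<beta>))^2)"
    using assms(6) unfolding S_def a_def by (intro sum_mono2) auto
  also have "\<dots> \<le> (\<Sum>\<beta>\<in>S. 1 / 4 * (1 / (distk m (a - real \<beta>))^2))"
  proof (rule sum_mono)
    fix \<beta> assume "\<beta> \<in> S"
    hence d: "distk m (a - real \<beta>) > 0" using assms unfolding S_def by auto
    have "cmod (zfourier m u \<beta>) \<le> 1 / (2 * distk m (a - real \<beta>))"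
      unfolding u_def a_def by (rule coef_bound) (use assms d a_def in auto)
    hence "(cmod (zfourier m u \<beta>))^2 \<le> (1 / (2 * distk m (a - real \<beta>)))^2"
      by (intro power_mono) auto
    thus "(cmod (zfourier m u \<beta>))^2 \<le> 1 / 4 * (1 / (distk m (a - real \<beta>))^2)"
      by (simp add: power_divide power_mult_distrib)
  qed
  also have "\<dots> = 1 / 4 * (\<Sum>\<beta>\<in>S. 1 / (distk m (a - real \<beta>))^2)" by (simp add: sum_distrib_left)
  also have "\<dots> \<le> 1 / 4 * (2 / (R - 1))"
    unfolding S_def by (intro mult_left_mono beta_sum) (use assms in auto)
  finally have "(\<Sum>\<beta>\<in>{..<m} - B. (cmod (zfourier m u \<beta>))^2) \<le> 1 / (2 * (R - 1))" by simp
  hence "real m * (\<Sum>\<beta>\<in>{..<m} - B. (cmod (zfourier m u \<beta>))^2) \<le> real m * (1 / (2 * (R - 1)))"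
    by (intro mult_left_mono) auto
  thus ?thesis unfolding u_def proj_nrm[OF assms(2,5)] by simp
qed


lemma zfourier_cong: "(\<And>x. x < N \<Longrightarrow> u x = v x) \<Longrightarrow> zfourier N u \<beta> = zfourier N v \<beta>"
  unfolding zfourier_def zinner_def by (intro arg_cong[where f = "\<lambda>s. (1 / of_nat N) * s"] sum.cong) auto

lemma P_cong: "(\<And>x. x < N \<Longrightarrow> u x = v x) \<Longrightarrow> x < N \<Longrightarrow> P N B u x = P N B v x"
  unfolding P_def zrestr_def using zfourier_cong[of N u v] by simp

theorem proposition4p3:
  fixes m n :: nat and f g :: "nat \<Rightarrow> complex" and \<Gamma> :: "nat set"
    and \<epsilon> \<epsilon>' :: real
  assumes "n > 0" and "m > 0"
    and "\<Gamma> \<subseteq> {..<n}"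
    and "\<epsilon> > 0"
    and "znorm2sq n (\<lambda>x. f x - zrestr n f \<Gamma> x) \<le> \<epsilon>"
    and "\<And>x. x < m \<Longrightarrow> g x = (if x < min n m then f x else 0)"
    and "\<epsilon>' > 0"
  shows "let r = real (card \<Gamma>) * znorm2sq n f / (2 * \<epsilon>');
             \<Gamma>' = {\<beta>. \<beta> < m \<and> (\<exists>\<alpha>\<in>\<Gamma>. distk m (real m / real n * real \<alpha> - real \<beta>) \<le> r + 1)};
             t = real n / real m
         in znorm2sq m (\<lambda>x. g x - zrestr m g \<Gamma>' x) \<le> t * \<epsilon> + \<epsilon>' + 2 * sqrt (t * \<epsilon> * \<epsilon>')"
proof -
  define r where "r = real (card \<Gamma>) * znorm2sq n f / (2 * \<epsilon>')"
  define \<Gamma>' where "\<Gamma>' = {\<beta>. \<beta> < m \<and> (\<exists>\<alpha>\<in>\<Gamma>. distk m (real m / real n * real \<alpha> - real \<beta>) \<le> r + 1)}"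
  define t where "t = real n / real m"
  define l where "l = min n m"
  define c where "c = zfourier n f"
  define h where "h = P n \<Gamma> f"
  define U where "U \<alpha> = (\<lambda>x. if x < l then zchar n \<alpha> x else 0)" for \<alpha>
  define G1 where "G1 = (\<lambda>x. \<Sum>\<alpha>\<in>\<Gamma>. c \<alpha> * U \<alpha> x)"
  define H where "H = (\<lambda>x. if x < l then h x else 0)"
  have finG: "finite \<Gamma>" using assms(3) finite_subset by blast
  have G'sub: "\<Gamma>' \<subseteq> {..<m}" unfolding \<Gamma>'_def by auto
  have Fn: "znorm2sq n f = (nrm n f)^2 / real n" by (rule znorm_nrm)
  have Fn0: "0 \<le> znorm2sq n f" unfolding Fn by simp
  have r0: "0 \<le> r" unfolding r_def using Fn0 assms by simp
  have gdec: "g x = G1 x + H x" if "x < m" for x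
  proof (cases "x < l")
    case True
    have "f x = zrestr n f \<Gamma> x + h x" unfolding h_def P_def by simp
    also have "zrestr n f \<Gamma> x = G1 x" unfolding zrestr_def G1_def U_def c_def using True by simp
    finally show ?thesis using assms(6)[OF that] True unfolding H_def l_def by simp
  next
    case False
    have "g x = 0" using assms(6)[OF that] False unfolding l_def by auto
    moreover have "G1 x = 0" unfolding G1_def U_def using False by simp
    moreover have "H x = 0" unfolding H_def using False by simp
    ultimately show ?thesis by simp
  qed
  have Pg: "P m \<Gamma>' g x = (\<Sum>\<alpha>\<in>\<Gamma>. c \<alpha> * P m \<Gamma>' (U \<alpha>) x) + P m \<Gamma>' H x" if "x < m" for x
  proof -
    have "P m \<Gamma>' g x = P m \<Gamma>' (\<lambda>x. G1 x + H x) x" by (rule P_cong[OF gdec that])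
    also have "\<dots> = P m \<Gamma>' G1 x + P m \<Gamma>' H x" by (rule P_add)
    also have "P m \<Gamma>' G1 x = (\<Sum>\<alpha>\<in>\<Gamma>. c \<alpha> * P m \<Gamma>' (U \<alpha>) x)" unfolding G1_def by (rule P_sum)
    finally show ?thesis .
  qed
  define A where "A = nrm m (\<lambda>x. \<Sum>\<alpha>\<in>\<Gamma>. c \<alpha> * P m \<Gamma>' (U \<alpha>) x)"
  define Bn where "Bn = nrm m H"
  have X: "nrm m (P m \<Gamma>' g) \<le> A + Bn"
  proof -
    have "nrm m (P m \<Gamma>' g) = nrm m (\<lambda>x. (\<Sum>\<alpha>\<in>\<Gamma>. c \<alpha> * P m \<Gamma>' (U \<alpha>) x) + P m \<Gamma>' H x)"
      by (rule nrm_cong) (rule Pg)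
    also have "\<dots> \<le> A + nrm m (P m \<Gamma>' H)" unfolding A_def by (rule nrm_triangle)
    also have "nrm m (P m \<Gamma>' H) \<le> Bn" unfolding Bn_def by (rule proj_le[OF assms(2) G'sub])
    finally show ?thesis by simp
  qed
  have B2: "Bn^2 \<le> real n * \<epsilon>"
  proof -
    have "Bn^2 = (\<Sum>x<m. (cmod (H x))^2)" unfolding Bn_def by (rule nrm_sq)
    also have "\<dots> = (\<Sum>x<l. (cmod (h x))^2)"
      unfolding H_def l_def by (rule sum.mono_neutral_cong_right) auto
    also have "\<dots> \<le> (\<Sum>x<n. (cmod (h x))^2)" unfolding l_def by (intro sum_mono2) auto
    also have "\<dots> = (nrm n h)^2" by (simp add: nrm_sq)
    also have "\<dots> = real n * znorm2sq n h" using assms(1) by (simp add: znorm_nrm)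
    also have "\<dots> \<le> real n * \<epsilon>" using assms(5) unfolding h_def P_def by (intro mult_left_mono) auto
    finally show ?thesis .
  qed
  define CA where "CA = L2_set (\<lambda>\<alpha>. cmod (c \<alpha>)) \<Gamma>"
  define CB where "CB = L2_set (\<lambda>\<alpha>. nrm m (P m \<Gamma>' (U \<alpha>))) \<Gamma>"
  have A_le: "A \<le> CA * CB"
  proof -
    have "A \<le> (\<Sum>\<alpha>\<in>\<Gamma>. nrm m (\<lambda>x. c \<alpha> * P m \<Gamma>' (U \<alpha>) x))" unfolding A_def by (rule nrm_sum[OF finG])
    also have "\<dots> = (\<Sum>\<alpha>\<in>\<Gamma>. \<bar>cmod (c \<alpha>)\<bar> * \<bar>nrm m (P m \<Gamma>' (U \<alpha>))\<bar>)"
      by (simp add: nrm_scale nrm_nonneg)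
    also have "\<dots> \<le> CA * CB" unfolding CA_def CB_def by (rule L2_set_mult_ineq)
    finally show ?thesis .
  qed
  have CA2: "CA^2 \<le> znorm2sq n f"
  proof -
    have "CA^2 = (\<Sum>\<alpha>\<in>\<Gamma>. (cmod (c \<alpha>))^2)" unfolding CA_def L2_set_def by (simp add: sum_nonneg)
    moreover have "real n * (\<Sum>\<alpha>\<in>\<Gamma>. (cmod (c \<alpha>))^2) \<le> (nrm n f)^2"
      unfolding c_def by (rule bessel[OF assms(1,3)])
    ultimately show ?thesis unfolding Fn using assms(1) by (simp add: pos_le_divide_eq mult.commute)
  qed
  have A2: "A^2 \<le> real m * \<epsilon>'"
  proof (cases "r = 0")
    case True
    hence "card \<Gamma> = 0 \<or> znorm2sq n f = 0" unfolding r_def using assms by simp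
    hence "CA * CB = 0"
    proof
      assume "card \<Gamma> = 0"
      hence "\<Gamma> = {}" using finG by simp
      thus ?thesis unfolding CA_def by simp
    next
      assume "znorm2sq n f = 0"
      hence "CA^2 \<le> 0" using CA2 by simp
      hence "CA = 0" by simp
      thus ?thesis by simp
    qed
    hence "A \<le> 0" using A_le by (metis)
    moreover have "0 \<le> A" unfolding A_def by (rule nrm_nonneg)
    ultimately show ?thesis using assms by simp
  next
    case False
    hence rpos: "r > 0" using r0 by simp
    have "CB^2 = (\<Sum>\<alpha>\<in>\<Gamma>. (nrm m (P m \<Gamma>' (U \<alpha>)))^2)" unfolding CB_def L2_set_def by (simp add: sum_nonneg)
    also have "\<dots> \<le> (\<Sum>\<alpha>\<in>\<Gamma>. real m / (2 * r))"
    proof (rule sum_mono)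
      fix \<alpha> assume \<alpha>: "\<alpha> \<in> \<Gamma>"
      have "(nrm m (P m \<Gamma>' (U \<alpha>)))^2 \<le> real m / (2 * ((r + 1) - 1))"
        unfolding U_def
      proof (rule trunc_bound)
        show "{..<m} - \<Gamma>' \<subseteq> {\<beta>. \<beta> < m \<and> r + 1 < distk m (real m / real n * real \<alpha> - real \<beta>)}"
          using \<alpha> unfolding \<Gamma>'_def by force
      qed (use assms rpos G'sub l_def in auto)
      thus "(nrm m (P m \<Gamma>' (U \<alpha>)))^2 \<le> real m / (2 * r)" by simp
    qed
    also have "\<dots> = real (card \<Gamma>) * (real m / (2 * r))" by simp
    finally have CB2: "CB^2 \<le> real (card \<Gamma>) * (real m / (2 * r))" .
    have "A^2 \<le> (CA * CB)^2"
      using A_le by (intro power_mono) (auto simp: A_def nrm_nonneg)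
    also have "\<dots> = CA^2 * CB^2" by (simp add: power_mult_distrib)
    also have "\<dots> \<le> znorm2sq n f * (real (card \<Gamma>) * (real m / (2 * r)))"
      using CA2 CB2 Fn0 by (intro mult_mono) auto
    also have "\<dots> = real m * \<epsilon>'"
    proof -
      have Q: "real (card \<Gamma>) * znorm2sq n f > 0" using rpos assms unfolding r_def by (simp add: zero_less_divide_iff)
      have "znorm2sq n f \<noteq> 0" using Q by (metis mult_zero_right less_irrefl)
      moreover have "real (card \<Gamma>) \<noteq> 0" using Q by (metis mult_zero_left less_irrefl)
      ultimately
      show ?thesis using assms unfolding r_def by (simp add: field_simps)
    qed
    finally show ?thesis .
  qed
  have A0: "0 \<le> A" unfolding A_def by (rule nrm_nonneg)
  have B0: "0 \<le> Bn" unfolding Bn_def by (rule nrm_nonneg)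
  have Ale: "A \<le> sqrt (real m * \<epsilon>')" using A2 A0 real_le_rsqrt by blast
  have Ble: "Bn \<le> sqrt (real n * \<epsilon>)" using B2 B0 real_le_rsqrt by blast
  have "A * Bn \<le> sqrt (real m * \<epsilon>') * sqrt (real n * \<epsilon>)"
    using Ale Ble A0 B0 assms by (intro mult_mono) auto
  also have "\<dots> = real m * sqrt (t * \<epsilon> * \<epsilon>')"
  proof -
    have "sqrt (real m * \<epsilon>') * sqrt (real n * \<epsilon>) = sqrt ((real m)^2 * (t * \<epsilon> * \<epsilon>'))"
      unfolding t_def using assms by (simp add: real_sqrt_mult[symmetric] power2_eq_square field_simps)
    also have "\<dots> = real m * sqrt (t * \<epsilon> * \<epsilon>')" by (simp add: real_sqrt_mult)
    finally show ?thesis .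
  qed
  finally have AB: "A * Bn \<le> real m * sqrt (t * \<epsilon> * \<epsilon>')" .
  have "(nrm m (P m \<Gamma>' g))^2 \<le> (A + Bn)^2"
    using X by (intro power_mono) (auto simp: nrm_nonneg)
  also have "\<dots> = A^2 + Bn^2 + 2 * (A * Bn)" by (simp add: power2_sum)
  also have "\<dots> \<le> real m * \<epsilon>' + real n * \<epsilon> + 2 * (real m * sqrt (t * \<epsilon> * \<epsilon>'))"
    using A2 B2 AB by linarith
  finally have fin: "(nrm m (P m \<Gamma>' g))^2 \<le> real m * \<epsilon>' + real n * \<epsilon> + 2 * (real m * sqrt (t * \<epsilon> * \<epsilon>'))" .
  have main: "znorm2sq m (\<lambda>x. g x - zrestr m g \<Gamma>' x) \<le> t * \<epsilon> + \<epsilon>' + 2 * sqrt (t * \<epsilon> * \<epsilon>')"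
  proof -
    have "znorm2sq m (\<lambda>x. g x - zrestr m g \<Gamma>' x) = (nrm m (P m \<Gamma>' g))^2 / real m"
      unfolding P_def[symmetric] by (rule znorm_nrm)
    also have "\<dots> \<le> (real m * \<epsilon>' + real n * \<epsilon> + 2 * (real m * sqrt (t * \<epsilon> * \<epsilon>'))) / real m"
      using fin assms by (intro divide_right_mono) auto
    also have "\<dots> = t * \<epsilon> + \<epsilon>' + 2 * sqrt (t * \<epsilon> * \<epsilon>')"
      unfolding t_def using assms by (simp add: field_simps)
    finally show ?thesis .
  qed
  show ?thesis using main by (simp only: Let_def r_def \<Gamma>'_def t_def)
qed


end
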